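(* Let $\lambda$ be a finite or countable signature. A sequence $(\mathbf A_n)_{n\in\mathbb N}$ of finite $\lambda$-structures is FO-convergent if and only if the sequence $(\mu_{\mathbf A_n})_{n\in\mathbb N}$ of measures on $S_\lambda$ is weakly-$\ast$ convergent. Moreover, if $\mu_{\mathbf A_n}$ converges weakly-$\ast$ to $\mu$, then for every $\phi\in\mathrm{FO}(\lambda)$, $$\int_{S_\lambda}\mathbf 1_{K(\phi)}\,\mathrm d\mu=\lim_{n\to\infty}\langle\phi,\mathbf A_n\rangle.$$
   Context: $\mathrm{FO}(\lambda)$ denotes first-order formulas in signature $\lambda$ with free variables from $x_1,x_2,\dots$. For $\phi$ with free variables among $x_1,\dots,x_p$ and a finite $\lambda$-structure $\mathbf A$ with domain $A$, $\langle\phi,\mathbf A\rangle=|\{(v_1,\dots,v_p)\in A^p:\mathbf A\models\phi(v_1,\dots,v_p)\}|/|A|^p$; $(\mathbf A_n)$ is FO-convergent if $\langle\phi,\mathbf A_n\rangle$ converges for every $\phi\in\mathrm{FO}(\lambda)$. $S_\lambda$ is the Stone space (space of ultrafilters) of the Boolean algebra of formulas of $\mathrm{FO}(\lambda)$ modulo logical equivalence; for $\phi\in\mathrm{FO}(\lambda)$, $K(\phi)$ is the clopen set of ultrafilters containing the class of $\phi$. For a finite $\lambda$-structure $\mathbf A$, $\mu_{\mathbf A}$ is the regular Borel probability measure on $S_\lambda$ with $\mu_{\mathbf A}(K(\phi))=\langle\phi,\mathbf A\rangle$ for all $\phi$. Weak-$\ast$ convergence of measures $\mu_n$ means convergence of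 $\int f\,\mathrm d\mu_n$ for every continuous $f:S_\lambda\to\mathbb R$. *)

theory Defs
  imports "HOL-Probability.Probability"
begin

datatype 'r fo =
    Rel 'r "nat list"
  | Eq nat nat
  | Neg "'r fo"
  | Conj "'r fo" "'r fo"
  | Ex nat "'r fo"

fun wf_fo :: "'r set \<Rightarrow> ('r \<Rightarrow> nat) \<Rightarrow> 'r fo \<Rightarrow> bool" where
  "wf_fo Sig ar (Rel R xs) = (R \<in> Sig \<and> length xs = ar R)"
| "wf_fo Sig ar (Eq i j) = True"
| "wf_fo Sig ar (Neg \<phi>) = wf_fo Sig ar \<phi>"
| "wf_fo Sig ar (Conj \<phi> \<psi>) = (wf_fo Sig ar \<phi> \<and> wf_fo Sig ar \<psi>)"
| "wf_fo Sig ar (Ex x \<phi>) = wf_fo Sig ar \<phi>"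

fun fv :: "'r fo \<Rightarrow> nat set" where
  "fv (Rel R xs) = set xs"
| "fv (Eq i j) = {i, j}"
| "fv (Neg \<phi>) = fv \<phi>"
| "fv (Conj \<phi> \<psi>) = fv \<phi> \<union> fv \<psi>"
| "fv (Ex x \<phi>) = fv \<phi> - {x}"

type_synonym ('a, 'r) struct = "'a set \<times> ('r \<Rightarrow> 'a list set)"

definition is_struct :: "'r set \<Rightarrow> ('r \<Rightarrow> nat) \<Rightarrow> ('a, 'r) struct \<Rightarrow> bool" where
  "is_struct Sig ar A \<longleftrightarrow> fst A \<noteq> {} \<and>
     (\<forall>R\<in>Sig. snd A R \<subseteq> {xs. set xs \<subseteq> fst A \<and> length xs = ar R})"

definition is_finite_struct :: "'r set \<Rightarrow> ('r \<Rightarrow> nat) \<Rightarrow> ('a, 'r) struct \<Rightarrow> bool" where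
  "is_finite_struct Sig ar A \<longleftrightarrow> is_struct Sig ar A \<and> finite (fst A)"

fun sat :: "('a, 'r) struct \<Rightarrow> (nat \<Rightarrow> 'a) \<Rightarrow> 'r fo \<Rightarrow> bool" where
  "sat A v (Rel R xs) = (map v xs \<in> snd A R)"
| "sat A v (Eq i j) = (v i = v j)"
| "sat A v (Neg \<phi>) = (\<not> sat A v \<phi>)"
| "sat A v (Conj \<phi> \<psi>) = (sat A v \<phi> \<and> sat A v \<psi>)"
| "sat A v (Ex x \<phi>) = (\<exists>d\<in>fst A. sat A (v(x := d)) \<phi>)"

definition fv_bound :: "'r fo \<Rightarrow> nat" where
  "fv_bound \<phi> = (if fv \<phi> = {} then 0 else Suc (Max (fv \<phi>)))"

definition stone_pairing :: "'r fo \<Rightarrow> ('a, 'r) struct \<Rightarrow> real" where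
  "stone_pairing \<phi> A =
     real (card {v \<in> {..<fv_bound \<phi>} \<rightarrow>\<^sub>E fst A. sat A v \<phi>})
       / real (card (fst A)) ^ fv_bound \<phi>"

text \<open>By the downward
  Loewenheim-Skolem theorem (the signature is countable), it suffices to range over
  structures whose domain is a (finite or countably infinite) set of natural numbers.\<close>
definition entails :: "'r set \<Rightarrow> ('r \<Rightarrow> nat) \<Rightarrow> 'r fo \<Rightarrow> 'r fo \<Rightarrow> bool" where
  "entails Sig ar \<phi> \<psi> \<longleftrightarrow>
     (\<forall>(M :: (nat, 'r) struct) v. is_struct Sig ar M \<longrightarrow> range v \<subseteq> fst M \<longrightarrow>
        sat M v \<phi> \<longrightarrow> sat M v \<psi>)"

text \<open>Ultrafilters of the Lindenbaum algebra FO(lambda)/equivalence, represented by the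
  (equivalence-closed) set of formulas whose classes they contain.  The Boolean order is
  entailment, meet is conjunction, complement is negation.\<close>
definition is_ultrafilter :: "'r set \<Rightarrow> ('r \<Rightarrow> nat) \<Rightarrow> 'r fo set \<Rightarrow> bool" where
  "is_ultrafilter Sig ar U \<longleftrightarrow>
     U \<subseteq> {\<phi>. wf_fo Sig ar \<phi>} \<and>
     (\<forall>\<phi>\<in>U. \<forall>\<psi>. wf_fo Sig ar \<psi> \<and> entails Sig ar \<phi> \<psi> \<longrightarrow> \<psi> \<in> U) \<and>
     (\<forall>\<phi>\<in>U. \<forall>\<psi>\<in>U. Conj \<phi> \<psi> \<in> U) \<and>
     (\<exists>\<phi>. wf_fo Sig ar \<phi> \<and> \<phi> \<notin> U) \<and>
     (\<forall>\<phi>. wf_fo Sig ar \<phi> \<longrightarrow> \<phi> \<in> U \<or> Neg \<phi> \<in> U)"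

definition stone_space :: "'r set \<Rightarrow> ('r \<Rightarrow> nat) \<Rightarrow> 'r fo set set" where
  "stone_space Sig ar = {U. is_ultrafilter Sig ar U}"

definition K :: "'r set \<Rightarrow> ('r \<Rightarrow> nat) \<Rightarrow> 'r fo \<Rightarrow> 'r fo set set" where
  "K Sig ar \<phi> = {U \<in> stone_space Sig ar. \<phi> \<in> U}"

definition stone_top :: "'r set \<Rightarrow> ('r \<Rightarrow> nat) \<Rightarrow> 'r fo set topology" where
  "stone_top Sig ar = topology_generated_by {K Sig ar \<phi> | \<phi>. wf_fo Sig ar \<phi>}"

definition borel_sets_of :: "'a topology \<Rightarrow> 'a set set" where
  "borel_sets_of T = sigma_sets (topspace T) {U. openin T U}"

definition regular_borel_prob :: "'a topology \<Rightarrow> 'a measure \<Rightarrow> bool" where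
  "regular_borel_prob T M \<longleftrightarrow>
     prob_space M \<and> space M = topspace T \<and> sets M = borel_sets_of T \<and>
     (\<forall>B \<in> sets M.
        measure M B = (SUP C \<in> {C. compactin T C \<and> C \<subseteq> B}. measure M C) \<and>
        measure M B = (INF U \<in> {U. openin T U \<and> B \<subseteq> U}. measure M U))"

definition weak_star_convergent :: "'a topology \<Rightarrow> (nat \<Rightarrow> 'a measure) \<Rightarrow> bool" where
  "weak_star_convergent T \<mu> \<longleftrightarrow>
     (\<forall>f. continuous_map T euclideanreal f \<longrightarrow> convergent (\<lambda>n. integral\<^sup>L (\<mu> n) f))"

definition weak_star_converges_to :: "'a topology \<Rightarrow> (nat \<Rightarrow> 'a measure) \<Rightarrow> 'a measure \<Rightarrow> bool" where
  "weak_star_converges_to T \<mu> \<nu> \<longleftrightarrow>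
     (\<forall>f. continuous_map T euclideanreal f \<longrightarrow>
        (\<lambda>n. integral\<^sup>L (\<mu> n) f) \<longlonglongrightarrow> integral\<^sup>L \<nu> f)"

definition FO_convergent :: "'r set \<Rightarrow> ('r \<Rightarrow> nat) \<Rightarrow> (nat \<Rightarrow> ('a, 'r) struct) \<Rightarrow> bool" where
  "FO_convergent Sig ar A \<longleftrightarrow>
     (\<forall>\<phi>. wf_fo Sig ar \<phi> \<longrightarrow> convergent (\<lambda>n. stone_pairing \<phi> (A n)))"

definition is_stone_measure_of :: "'r set \<Rightarrow> ('r \<Rightarrow> nat) \<Rightarrow> ('a, 'r) struct \<Rightarrow> 'r fo set measure \<Rightarrow> bool" where
  "is_stone_measure_of Sig ar A \<mu> \<longleftrightarrow>
     regular_borel_prob (stone_top Sig ar) \<mu> \<and>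
     (\<forall>\<phi>. wf_fo Sig ar \<phi> \<longrightarrow> measure \<mu> (K Sig ar \<phi>) = stone_pairing \<phi> A)"

end

theory Submission imports Defs begin

definition finsat :: "'r set \<Rightarrow> ('r \<Rightarrow> nat) \<Rightarrow> 'r fo set \<Rightarrow> bool" where
 "finsat Sig ar S \<longleftrightarrow> S \<subseteq> {\<phi>. wf_fo Sig ar \<phi>} \<and>
   (\<forall>S'. S' \<subseteq> S \<longrightarrow> finite S' \<longrightarrow>
     (\<exists>(M::(nat,'r) struct) v. is_struct Sig ar M \<and> range v \<subseteq> fst M \<and> (\<forall>\<theta>\<in>S'. sat M v \<theta>)))"

lemma ultra_sat:
  fixes Sig :: "'r set"
  assumes U: "is_ultrafilter Sig ar U" and S: "finite S'" "S' \<subseteq> U"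
  shows "\<exists>(M::(nat,'r) struct) v. is_struct Sig ar M \<and> range v \<subseteq> fst M \<and> (\<forall>\<theta>\<in>S'. sat M v \<theta>)"
proof -
  have "\<exists>\<theta>\<in>U. \<forall>\<psi>\<in>S'. entails Sig ar \<theta> \<psi>" using S
  proof (induction S' rule: finite_induct)
    case empty
    have "Eq 0 0 \<in> U \<or> Neg (Eq 0 0) \<in> U" using U unfolding is_ultrafilter_def by simp
    then show ?case by blast
  next
    case (insert x F)
    then obtain \<theta> where th: "\<theta> \<in> U" "\<forall>\<psi>\<in>F. entails Sig ar \<theta> \<psi>" by auto
    have "Conj \<theta> x \<in> U" using U th insert.prems unfolding is_ultrafilter_def by auto
    moreover have "\<forall>\<psi>\<in>insert x F. entails Sig ar (Conj \<theta> x) \<psi>"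
      using th unfolding entails_def by auto
    ultimately show ?case by blast
  qed
  then obtain \<theta> where th: "\<theta> \<in> U" "\<forall>\<psi>\<in>S'. entails Sig ar \<theta> \<psi>" by blast
  obtain \<phi>0 where p0: "wf_fo Sig ar \<phi>0" "\<phi>0 \<notin> U" using U unfolding is_ultrafilter_def by blast
  have "\<not> entails Sig ar \<theta> \<phi>0" using U th p0 unfolding is_ultrafilter_def by blast
  then obtain M :: "(nat,'r) struct" and v where "is_struct Sig ar M" "range v \<subseteq> fst M" "sat M v \<theta>"
    unfolding entails_def by blast
  then show ?thesis using th unfolding entails_def by blast
qed

lemma ultra_not_both:
  fixes Sig :: "'r set"
  assumes U: "is_ultrafilter Sig ar U" and "\<phi> \<in> U" "Neg \<phi> \<in> U" shows False
  using ultra_sat[OF U, of "{\<phi>, Neg \<phi>}"] assms by auto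

lemma finsat_max_ultra:
  fixes Sig :: "'r set"
  assumes fs: "finsat Sig ar S" and max: "\<And>X. finsat Sig ar X \<Longrightarrow> S \<subseteq> X \<Longrightarrow> X = S"
  shows "is_ultrafilter Sig ar S"
proof -
  have wfS: "S \<subseteq> {\<phi>. wf_fo Sig ar \<phi>}" using fs unfolding finsat_def by simp
  have sat: "\<exists>(M::(nat,'r) struct) v. is_struct Sig ar M \<and> range v \<subseteq> fst M \<and> (\<forall>\<theta>\<in>S'. sat M v \<theta>)"
    if "S' \<subseteq> S" "finite S'" for S' using fs that unfolding finsat_def by blast
  have up: "\<psi> \<in> S" if "\<phi> \<in> S" "wf_fo Sig ar \<psi>" "\<And>(M::(nat,'r) struct) v. is_struct Sig ar M \<Longrightarrow> range v \<subseteq> fst M \<Longrightarrow> sat M v \<phi> \<Longrightarrow> sat M v \<psi>" for \<phi> \<psi>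
  proof -
    have "finsat Sig ar (insert \<psi> S)" unfolding finsat_def
    proof (intro conjI allI impI)
      show "insert \<psi> S \<subseteq> {\<phi>. wf_fo Sig ar \<phi>}" using wfS that by auto
      fix S' assume S': "S' \<subseteq> insert \<psi> S" "finite S'"
      have "insert \<phi> (S' - {\<psi>}) \<subseteq> S" "finite (insert \<phi> (S' - {\<psi>}))" using S' that(1) by auto
      then obtain M :: "(nat,'r) struct" and v where M: "is_struct Sig ar M" "range v \<subseteq> fst M" "\<forall>\<theta>\<in>insert \<phi> (S' - {\<psi>}). sat M v \<theta>"
        using sat[of "insert \<phi> (S' - {\<psi>})"] by blast
      then show "\<exists>(M::(nat,'r) struct) v. is_struct Sig ar M \<and> range v \<subseteq> fst M \<and> (\<forall>\<theta>\<in>S'. sat M v \<theta>)"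
        using that(3)[OF M(1,2)] by (intro exI[of _ M] exI[of _ v]) auto
    qed
    then show ?thesis using max by blast
  qed
  show ?thesis unfolding is_ultrafilter_def
  proof (intro conjI ballI allI impI)
    show "S \<subseteq> {\<phi>. wf_fo Sig ar \<phi>}" by (rule wfS)
    show "\<psi> \<in> S" if "\<phi> \<in> S" "wf_fo Sig ar \<psi> \<and> entails Sig ar \<phi> \<psi>" for \<phi> \<psi>
    proof (rule up[of \<phi>])
      show "\<phi> \<in> S" using that by simp
      show "wf_fo Sig ar \<psi>" using that by simp
      fix M :: "(nat,'r) struct" and v assume "is_struct Sig ar M" "range v \<subseteq> fst M" "sat M v \<phi>"
      then show "sat M v \<psi>" using that unfolding entails_def by blast
    qed
    show "Conj \<phi> \<psi> \<in> S" if "\<phi> \<in> S" "\<psi> \<in> S" for \<phi> \<psi>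
    proof -
      have "finsat Sig ar (insert (Conj \<phi> \<psi>) S)" unfolding finsat_def
      proof (intro conjI allI impI)
        show "insert (Conj \<phi> \<psi>) S \<subseteq> {\<phi>. wf_fo Sig ar \<phi>}" using wfS that by auto
        fix S' assume S': "S' \<subseteq> insert (Conj \<phi> \<psi>) S" "finite S'"
        have "insert \<phi> (insert \<psi> (S' - {Conj \<phi> \<psi>})) \<subseteq> S" "finite (insert \<phi> (insert \<psi> (S' - {Conj \<phi> \<psi>})))" using S' that by auto
        then obtain M :: "(nat,'r) struct" and v where M: "is_struct Sig ar M" "range v \<subseteq> fst M" "\<forall>\<theta>\<in>insert \<phi> (insert \<psi> (S' - {Conj \<phi> \<psi>})). sat M v \<theta>"
          using sat[of "insert \<phi> (insert \<psi> (S' - {Conj \<phi> \<psi>}))"] by blast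
        then show "\<exists>(M::(nat,'r) struct) v. is_struct Sig ar M \<and> range v \<subseteq> fst M \<and> (\<forall>\<theta>\<in>S'. sat M v \<theta>)"
          by (intro exI[of _ M] exI[of _ v]) auto
      qed
      then show ?thesis using max by blast
    qed
    show "\<exists>\<phi>. wf_fo Sig ar \<phi> \<and> \<phi> \<notin> S"
    proof (intro exI conjI)
      have "\<not> (\<exists>(M::(nat,'r) struct) v. is_struct Sig ar M \<and> range v \<subseteq> fst M \<and> (\<forall>\<theta>\<in>{Neg (Eq 0 0)}. sat M v \<theta>))" by simp
      then show "Neg (Eq 0 0) \<notin> S" using sat[of "{Neg (Eq 0 0)}"] by blast
    qed simp
    show "\<phi> \<in> S \<or> Neg \<phi> \<in> S" if "wf_fo Sig ar \<phi>" for \<phi>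
    proof (rule ccontr)
      assume nn: "\<not> (\<phi> \<in> S \<or> Neg \<phi> \<in> S)"
      have nfs: "\<not> finsat Sig ar (insert \<xi> S)" if "\<xi> \<notin> S" for \<xi>
        using max[of "insert \<xi> S"] that by blast
      have ex: "\<exists>S1. S1 \<subseteq> S \<and> finite S1 \<and> (\<forall>(M::(nat,'r) struct) v. is_struct Sig ar M \<and> range v \<subseteq> fst M \<and> (\<forall>\<theta>\<in>S1. sat M v \<theta>) \<longrightarrow> \<not> sat M v \<xi>)"
        if "\<xi> \<notin> S" "wf_fo Sig ar \<xi>" for \<xi>
      proof -
        have "\<not> finsat Sig ar (insert \<xi> S)" using nfs that(1) .
        moreover have "insert \<xi> S \<subseteq> {\<phi>. wf_fo Sig ar \<phi>}" using wfS that(2) by auto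
        ultimately obtain S' where S': "S' \<subseteq> insert \<xi> S" "finite S'"
          and ns: "\<not> (\<exists>(M::(nat,'r) struct) v. is_struct Sig ar M \<and> range v \<subseteq> fst M \<and> (\<forall>\<theta>\<in>S'. sat M v \<theta>))"
          unfolding finsat_def by blast
        show ?thesis
        proof (intro exI[of _ "S' - {\<xi>}"] conjI allI impI)
          show "S' - {\<xi>} \<subseteq> S" using S' by auto
          show "finite (S' - {\<xi>})" using S' by auto
          fix M :: "(nat,'r) struct" and v
          assume "is_struct Sig ar M \<and> range v \<subseteq> fst M \<and> (\<forall>\<theta>\<in>S' - {\<xi>}. sat M v \<theta>)"
          then show "\<not> sat M v \<xi>" using ns by blast
        qed
      qed
      have nphi: "\<phi> \<notin> S" and nnphi: "Neg \<phi> \<notin> S" using nn by simp_all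
      have wfn: "wf_fo Sig ar (Neg \<phi>)" using that by simp
      from ex[OF nphi that] obtain S1 where S1a: "S1 \<subseteq> S \<and> finite S1 \<and> (\<forall>(M::(nat,'r) struct) v. is_struct Sig ar M \<and> range v \<subseteq> fst M \<and> (\<forall>\<theta>\<in>S1. sat M v \<theta>) \<longrightarrow> \<not> sat M v \<phi>)" ..
      from ex[OF nnphi wfn] obtain S2 where S2a: "S2 \<subseteq> S \<and> finite S2 \<and> (\<forall>(M::(nat,'r) struct) v. is_struct Sig ar M \<and> range v \<subseteq> fst M \<and> (\<forall>\<theta>\<in>S2. sat M v \<theta>) \<longrightarrow> \<not> sat M v (Neg \<phi>))" ..
      note S1 = conjunct1[OF S1a] conjunct1[OF conjunct2[OF S1a]] conjunct2[OF conjunct2[OF S1a]]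
      note S2 = conjunct1[OF S2a] conjunct1[OF conjunct2[OF S2a]] conjunct2[OF conjunct2[OF S2a]]
      have "S1 \<union> S2 \<subseteq> S" "finite (S1 \<union> S2)" using S1 S2 by auto
      then obtain M :: "(nat,'r) struct" and v where "is_struct Sig ar M" "range v \<subseteq> fst M" "\<forall>\<theta>\<in>S1 \<union> S2. sat M v \<theta>"
        using sat[of "S1 \<union> S2"] by blast
      then have "\<not> sat M v \<phi>" "\<not> sat M v (Neg \<phi>)" using S1(3) S2(3) by blast+
      then show False by simp
    qed
  qed
qed

lemma finsatD:
  fixes Sig :: "'r set"
  assumes "finsat Sig ar S" "S' \<subseteq> S" "finite S'"
  shows "\<exists>(M::(nat,'r) struct) v. is_struct Sig ar M \<and> range v \<subseteq> fst M \<and> (\<forall>\<theta>\<in>S'. sat M v \<theta>)"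
  using assms unfolding finsat_def by blast

lemma finsat_wf:
  assumes "finsat Sig ar S" "x \<in> S" shows "wf_fo Sig ar x"
  using assms unfolding finsat_def by blast

lemma finsat_extend:
  fixes Sig :: "'r set"
  assumes fs: "finsat Sig ar \<Psi>"
  shows "\<exists>U. is_ultrafilter Sig ar U \<and> \<Psi> \<subseteq> U"
proof -
  define A where "A = {S. finsat Sig ar S \<and> \<Psi> \<subseteq> S}"
  have chainub: "\<exists>U\<in>A. \<forall>X\<in>C. X \<subseteq> U" if C: "subset.chain A C" for C
  proof (cases "C = {}")
    case True then show ?thesis using fs unfolding A_def by auto
  next
    case False
    have CA: "C \<subseteq> A" using C unfolding subset_chain_def by (rule conjunct1)
    have "finsat Sig ar (\<Union>C)" unfolding finsat_def
    proof (intro conjI allI impI)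
      show "\<Union>C \<subseteq> {\<phi>. wf_fo Sig ar \<phi>}"
      proof
        fix x assume "x \<in> \<Union>C"
        then obtain B where "B \<in> C" "x \<in> B" by blast
        then have "finsat Sig ar B" using CA unfolding A_def by blast
        then show "x \<in> {\<phi>. wf_fo Sig ar \<phi>}" using \<open>x\<in>B\<close> finsat_wf by blast
      qed
      fix S' assume S': "S' \<subseteq> \<Union>C" "finite S'"
      obtain B where B: "B \<in> C" "S' \<subseteq> B" using finite_subset_Union_chain[OF S'(2) S'(1) False C] by blast
      then have "finsat Sig ar B" using CA unfolding A_def by blast
      then show "\<exists>(M::(nat,'r) struct) v. is_struct Sig ar M \<and> range v \<subseteq> fst M \<and> (\<forall>\<theta>\<in>S'. sat M v \<theta>)"
        using B(2) S'(2) by (rule finsatD)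
    qed
    moreover obtain B0 where "B0 \<in> C" using False by blast
    then have "\<Psi> \<subseteq> \<Union>C" using CA unfolding A_def by blast
    ultimately have "\<Union>C \<in> A" unfolding A_def by blast
    then show ?thesis by blast
  qed
  obtain S where S: "S \<in> A" "\<forall>X\<in>A. S \<subseteq> X \<longrightarrow> X = S"
    using subset_Zorn[OF chainub] by blast
  have "is_ultrafilter Sig ar S"
  proof (rule finsat_max_ultra)
    show "finsat Sig ar S" using S(1) unfolding A_def by blast
    fix X assume "finsat Sig ar X" "S \<subseteq> X"
    moreover have "\<Psi> \<subseteq> S" using S(1) unfolding A_def by blast
    ultimately have "X \<in> A" unfolding A_def by blast
    then show "X = S" using S(2) \<open>S \<subseteq> X\<close> by blast
  qed
  then show ?thesis using S(1) unfolding A_def by blast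
qed


lemma neg_bot_notin:
  fixes Sig :: "'r set"
  assumes U: "is_ultrafilter Sig ar U" shows "Neg (Eq 0 0) \<notin> U"
proof
  assume "Neg (Eq 0 0) \<in> U"
  then obtain M :: "(nat,'r) struct" and v where "sat M v (Neg (Eq 0 0))"
    using ultra_sat[OF U, of "{Neg (Eq 0 0)}"] by blast
  then show False by simp
qed

lemma K_top:
  fixes Sig :: "'r set"
  shows "K Sig ar (Eq 0 0) = stone_space Sig ar"
proof -
  have "Eq 0 0 \<in> U" if "U \<in> stone_space Sig ar" for U
  proof -
    have U: "is_ultrafilter Sig ar U" using that unfolding stone_space_def by simp
    then have "Eq 0 0 \<in> U \<or> Neg (Eq 0 0) \<in> U" unfolding is_ultrafilter_def by simp
    then show ?thesis using neg_bot_notin[OF U] by blast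
  qed
  then show ?thesis unfolding K_def by blast
qed

lemma K_sub: "K Sig ar \<phi> \<subseteq> stone_space Sig ar"
  unfolding K_def by blast

lemma K_neg:
  fixes Sig :: "'r set"
  assumes "wf_fo Sig ar \<phi>"
  shows "K Sig ar (Neg \<phi>) = stone_space Sig ar - K Sig ar \<phi>"
proof -
  have "Neg \<phi> \<in> U \<longleftrightarrow> \<phi> \<notin> U" if "U \<in> stone_space Sig ar" for U
  proof -
    have U: "is_ultrafilter Sig ar U" using that unfolding stone_space_def by simp
    then have "\<phi> \<in> U \<or> Neg \<phi> \<in> U" using assms unfolding is_ultrafilter_def by simp
    moreover have "\<not> (\<phi> \<in> U \<and> Neg \<phi> \<in> U)" using ultra_not_both[OF U] by blast
    ultimately show ?thesis by blast
  qed
  then show ?thesis unfolding K_def by blast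
qed

lemma K_conj:
  fixes Sig :: "'r set"
  assumes "wf_fo Sig ar a" "wf_fo Sig ar b"
  shows "K Sig ar (Conj a b) = K Sig ar a \<inter> K Sig ar b"
proof -
  have "Conj a b \<in> U \<longleftrightarrow> a \<in> U \<and> b \<in> U" if "U \<in> stone_space Sig ar" for U
  proof -
    have U: "is_ultrafilter Sig ar U" using that unfolding stone_space_def by simp
    have ea: "entails Sig ar (Conj a b) a" and eb: "entails Sig ar (Conj a b) b"
      unfolding entails_def by auto
    show ?thesis
    proof
      assume "Conj a b \<in> U"
      then show "a \<in> U \<and> b \<in> U" using U ea eb assms unfolding is_ultrafilter_def by blast
    next
      assume "a \<in> U \<and> b \<in> U"
      then show "Conj a b \<in> U" using U unfolding is_ultrafilter_def by blast
    qed
  qed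
  then show ?thesis unfolding K_def by blast
qed

lemma topspace_stone:
  fixes Sig :: "'r set"
  shows "topspace (stone_top Sig ar) = stone_space Sig ar"
proof -
  have "\<Union>{K Sig ar \<phi> | \<phi>. wf_fo Sig ar \<phi>} = stone_space Sig ar"
  proof
    show "\<Union>{K Sig ar \<phi> | \<phi>. wf_fo Sig ar \<phi>} \<subseteq> stone_space Sig ar" using K_sub by blast
    have "K Sig ar (Eq 0 0) \<in> {K Sig ar \<phi> | \<phi>. wf_fo Sig ar \<phi>}" by auto
    then show "stone_space Sig ar \<subseteq> \<Union>{K Sig ar \<phi> | \<phi>. wf_fo Sig ar \<phi>}" using K_top by blast
  qed
  then show ?thesis unfolding stone_top_def by simp
qed

lemma openK:
  assumes "wf_fo Sig ar \<phi>" shows "openin (stone_top Sig ar) (K Sig ar \<phi>)"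
  unfolding stone_top_def by (rule topology_generated_by_Basis) (use assms in blast)

lemma open_basis:
  fixes Sig :: "'r set"
  assumes "openin (stone_top Sig ar) s" "U \<in> s"
  shows "\<exists>\<phi>. wf_fo Sig ar \<phi> \<and> U \<in> K Sig ar \<phi> \<and> K Sig ar \<phi> \<subseteq> s"
proof -
  have g: "generate_topology_on {K Sig ar \<phi> | \<phi>. wf_fo Sig ar \<phi>} s"
    using assms(1) unfolding stone_top_def by (rule openin_topology_generated_by)
  have "\<forall>U\<in>s. \<exists>\<phi>. wf_fo Sig ar \<phi> \<and> U \<in> K Sig ar \<phi> \<and> K Sig ar \<phi> \<subseteq> s"
    using g
  proof (induction rule: generate_topology_on.induct)
    case Empty then show ?case by simp
  next
    case (Int a b)
    show ?case
    proof
      fix U assume "U \<in> a \<inter> b"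
      then obtain \<phi> \<psi> where p: "wf_fo Sig ar \<phi>" "U \<in> K Sig ar \<phi>" "K Sig ar \<phi> \<subseteq> a"
        and q: "wf_fo Sig ar \<psi>" "U \<in> K Sig ar \<psi>" "K Sig ar \<psi> \<subseteq> b"
        using Int.IH by blast
      have "K Sig ar (Conj \<phi> \<psi>) = K Sig ar \<phi> \<inter> K Sig ar \<psi>" using K_conj p(1) q(1) by blast
      then show "\<exists>\<phi>. wf_fo Sig ar \<phi> \<and> U \<in> K Sig ar \<phi> \<and> K Sig ar \<phi> \<subseteq> a \<inter> b"
        using p q by (intro exI[of _ "Conj \<phi> \<psi>"]) auto
    qed
  next
    case (UN KK)
    show ?case
    proof
      fix U assume "U \<in> \<Union>KK"
      then obtain k where "k \<in> KK" "U \<in> k" by blast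
      then obtain \<phi> where "wf_fo Sig ar \<phi>" "U \<in> K Sig ar \<phi>" "K Sig ar \<phi> \<subseteq> k" using UN.IH by blast
      then show "\<exists>\<phi>. wf_fo Sig ar \<phi> \<and> U \<in> K Sig ar \<phi> \<and> K Sig ar \<phi> \<subseteq> \<Union>KK"
        using \<open>k \<in> KK\<close> by blast
    qed
  next
    case (Basis s)
    then show ?case by blast
  qed
  then show ?thesis using assms(2) by blast
qed

lemma stone_cover:
  fixes Sig :: "'r set"
  assumes wf: "\<Phi> \<subseteq> {\<phi>. wf_fo Sig ar \<phi>}" and cov: "stone_space Sig ar \<subseteq> \<Union>(K Sig ar ` \<Phi>)"
  shows "\<exists>\<Phi>'. finite \<Phi>' \<and> \<Phi>' \<subseteq> \<Phi> \<and> stone_space Sig ar \<subseteq> \<Union>(K Sig ar ` \<Phi>')"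
proof (rule ccontr)
  assume nc: "\<not> ?thesis"
  have "finsat Sig ar (Neg ` \<Phi>)" unfolding finsat_def
  proof (intro conjI allI impI)
    show "Neg ` \<Phi> \<subseteq> {\<phi>. wf_fo Sig ar \<phi>}" using wf by auto
    fix S' assume S': "S' \<subseteq> Neg ` \<Phi>" "finite S'"
    then obtain \<Phi>' where P: "\<Phi>' \<subseteq> \<Phi>" "finite \<Phi>'" "S' = Neg ` \<Phi>'"
      using finite_subset_image[OF S'(2) S'(1)] by blast
    then have "\<not> stone_space Sig ar \<subseteq> \<Union>(K Sig ar ` \<Phi>')" using nc by blast
    then obtain U where U: "U \<in> stone_space Sig ar" "\<forall>\<phi>\<in>\<Phi>'. U \<notin> K Sig ar \<phi>" by blast
    have Uu: "is_ultrafilter Sig ar U" using U(1) unfolding stone_space_def by simp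
    have "Neg \<phi> \<in> U" if "\<phi> \<in> \<Phi>'" for \<phi>
    proof -
      have "\<phi> \<notin> U" using U that unfolding K_def by blast
      moreover have "wf_fo Sig ar \<phi>" using that P(1) wf by blast
      ultimately show ?thesis using Uu unfolding is_ultrafilter_def by blast
    qed
    then have "S' \<subseteq> U" using P(3) by blast
    then show "\<exists>(M::(nat,'r) struct) v. is_struct Sig ar M \<and> range v \<subseteq> fst M \<and> (\<forall>\<theta>\<in>S'. sat M v \<theta>)"
      using ultra_sat[OF Uu S'(2)] by blast
  qed
  then obtain U where U: "is_ultrafilter Sig ar U" "Neg ` \<Phi> \<subseteq> U" using finsat_extend by blast
  then have "U \<in> stone_space Sig ar" unfolding stone_space_def by simp
  then obtain \<phi> where "\<phi> \<in> \<Phi>" "U \<in> K Sig ar \<phi>" using cov by blast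
  then have "\<phi> \<in> U" "Neg \<phi> \<in> U" using U unfolding K_def by auto
  then show False using ultra_not_both[OF U(1)] by blast
qed


definition Kcl :: "'r set \<Rightarrow> ('r \<Rightarrow> nat) \<Rightarrow> 'r fo set set set" where
  "Kcl Sig ar = {K Sig ar \<phi> | \<phi>. wf_fo Sig ar \<phi>}"

lemma KclI: "wf_fo Sig ar \<phi> \<Longrightarrow> K Sig ar \<phi> \<in> Kcl Sig ar"
  unfolding Kcl_def by blast

lemma Kcl_empty:
  fixes Sig :: "'r set"
  shows "{} \<in> Kcl Sig ar"
proof -
  have "K Sig ar (Neg (Eq 0 0)) = {}" using K_neg[of Sig ar "Eq 0 0"] K_top[of Sig ar] by simp
  moreover have "wf_fo Sig ar (Neg (Eq 0 0))" by simp
  ultimately show ?thesis using KclI[of Sig ar "Neg (Eq 0 0)"] by simp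
qed

lemma Kcl_diff:
  fixes Sig :: "'r set"
  assumes "X \<in> Kcl Sig ar" "Y \<in> Kcl Sig ar" shows "X - Y \<in> Kcl Sig ar"
proof -
  obtain a b where ab: "wf_fo Sig ar a" "wf_fo Sig ar b" "X = K Sig ar a" "Y = K Sig ar b"
    using assms unfolding Kcl_def by blast
  have "K Sig ar (Conj a (Neg b)) = K Sig ar a \<inter> (stone_space Sig ar - K Sig ar b)"
    using K_conj[of Sig ar a "Neg b"] K_neg[of Sig ar b] ab by simp
  also have "\<dots> = X - Y" using ab K_sub[of Sig ar a] by blast
  moreover have "wf_fo Sig ar (Conj a (Neg b))" using ab by simp
  ultimately show ?thesis using KclI[of Sig ar "Conj a (Neg b)"] by simp
qed

lemma Kcl_un:
  fixes Sig :: "'r set"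
  assumes "X \<in> Kcl Sig ar" "Y \<in> Kcl Sig ar" shows "X \<union> Y \<in> Kcl Sig ar"
proof -
  obtain a b where ab: "wf_fo Sig ar a" "wf_fo Sig ar b" "X = K Sig ar a" "Y = K Sig ar b"
    using assms unfolding Kcl_def by blast
  have w: "wf_fo Sig ar (Conj (Neg a) (Neg b))" using ab by simp
  have "K Sig ar (Neg (Conj (Neg a) (Neg b))) = stone_space Sig ar - ((stone_space Sig ar - K Sig ar a) \<inter> (stone_space Sig ar - K Sig ar b))"
    using K_neg[OF w] K_conj[of Sig ar "Neg a" "Neg b"] K_neg[of Sig ar a] K_neg[of Sig ar b] ab by simp
  also have "\<dots> = X \<union> Y" using ab K_sub[of Sig ar a] K_sub[of Sig ar b] by blast
  moreover have "wf_fo Sig ar (Neg (Conj (Neg a) (Neg b)))" using ab by simp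
  ultimately show ?thesis using KclI[of Sig ar "Neg (Conj (Neg a) (Neg b))"] by simp
qed

lemma rbpD:
  assumes "regular_borel_prob T M"
  shows "prob_space M" "space M = topspace T" "sets M = borel_sets_of T"
proof -
  note h = assms[unfolded regular_borel_prob_def]
  show "prob_space M" by (rule conjunct1[OF h])
  show "space M = topspace T" by (rule conjunct1[OF conjunct2[OF h]])
  show "sets M = borel_sets_of T" by (rule conjunct1[OF conjunct2[OF conjunct2[OF h]]])
qed

lemma rbp_sets:
  assumes "regular_borel_prob T M" "openin T S" shows "S \<in> sets M"
proof -
  have "S \<in> sigma_sets (topspace T) {U. openin T U}" using assms(2) by (intro sigma_sets.Basic) simp
  then show ?thesis using rbpD(3)[OF assms(1)] unfolding borel_sets_of_def by simp
qed

lemma rbp_space: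
  assumes "regular_borel_prob T M" shows "space M = topspace T"
  by (rule rbpD(2)[OF assms])

lemma rbp_prob:
  assumes "regular_borel_prob T M" shows "prob_space M"
  by (rule rbpD(1)[OF assms])

lemma rbp_meas:
  assumes M: "regular_borel_prob T M" and f: "continuous_map T euclideanreal f"
  shows "f \<in> borel_measurable M"
proof (rule borel_measurableI)
  fix S :: "real set" assume "open S"
  have "openin T {x \<in> topspace T. f x \<in> S}"
    by (rule openin_continuous_map_preimage[OF f]) (use \<open>open S\<close> in simp)
  moreover have "f -` S \<inter> space M = {x \<in> topspace T. f x \<in> S}" using rbp_space[OF M] by blast
  ultimately show "f -` S \<inter> space M \<in> sets M" using rbp_sets[OF M] by simp
qed

lemma Kcl_sets:
  assumes M: "regular_borel_prob (stone_top Sig ar) M" and D: "D \<in> Kcl Sig ar"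
  shows "D \<in> sets M"
proof -
  obtain \<phi> where "wf_fo Sig ar \<phi>" "D = K Sig ar \<phi>" using D unfolding Kcl_def by blast
  then show ?thesis using openK rbp_sets[OF M] by blast
qed

lemma cont_ind:
  fixes Sig :: "'r set"
  assumes wf: "wf_fo Sig ar \<phi>"
  shows "continuous_map (stone_top Sig ar) euclideanreal (indicator (K Sig ar \<phi>) :: 'r fo set \<Rightarrow> real)"
  unfolding continuous_map_def
proof (intro conjI allI impI)
  show "(indicator (K Sig ar \<phi>) :: 'r fo set \<Rightarrow> real) \<in> topspace (stone_top Sig ar) \<rightarrow> topspace euclideanreal" by simp
  fix Ob :: "real set" assume "openin euclideanreal Ob"
  let ?P = "{x \<in> topspace (stone_top Sig ar). (indicator (K Sig ar \<phi>) x :: real) \<in> Ob}"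
  have ts: "topspace (stone_top Sig ar) = stone_space Sig ar" by (rule topspace_stone)
  have ks: "K Sig ar \<phi> \<subseteq> stone_space Sig ar" by (rule K_sub)
  have "?P = (if 1 \<in> Ob then (if 0 \<in> Ob then stone_space Sig ar else K Sig ar \<phi>)
              else (if 0 \<in> Ob then K Sig ar (Neg \<phi>) else {}))"
    using ks unfolding ts K_neg[OF wf] by (auto simp: indicator_def)
  moreover have "openin (stone_top Sig ar) (stone_space Sig ar)" using openin_topspace[of "stone_top Sig ar"] unfolding ts .
  moreover have "openin (stone_top Sig ar) (K Sig ar \<phi>)" using openK wf by blast
  moreover have "openin (stone_top Sig ar) (K Sig ar (Neg \<phi>))" using openK[of Sig ar "Neg \<phi>"] wf by simp
  ultimately show "openin (stone_top Sig ar) ?P" by (simp split: if_split)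
qed

lemma int_K:
  fixes Sig :: "'r set"
  assumes M: "is_stone_measure_of Sig ar A M" and wf: "wf_fo Sig ar \<phi>"
  shows "integral\<^sup>L M (indicator (K Sig ar \<phi>)) = stone_pairing \<phi> A"
proof -
  have rb: "regular_borel_prob (stone_top Sig ar) M" using M unfolding is_stone_measure_of_def by blast
  have "K Sig ar \<phi> \<inter> space M = K Sig ar \<phi>" using rbp_space[OF rb] topspace_stone K_sub by blast
  then show ?thesis using M wf unfolding is_stone_measure_of_def by simp
qed


lemma approx:
  fixes Sig :: "'r set"
  assumes f: "continuous_map (stone_top Sig ar) euclideanreal f" and e: "\<epsilon> > 0"
  shows "\<exists>(m::nat) c D. (\<forall>i<m. D i \<in> Kcl Sig ar) \<and>
           (\<forall>U\<in>stone_space Sig ar. \<bar>f U - (\<Sum>i<m. c i * indicator (D i) U)\<bar> \<le> \<epsilon>)"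
proof -
  define \<Phi> where "\<Phi> = {\<phi>. wf_fo Sig ar \<phi> \<and> (\<forall>U\<in>K Sig ar \<phi>. \<forall>V\<in>K Sig ar \<phi>. \<bar>f U - f V\<bar> < \<epsilon>)}"
  have \<Phi>wf: "\<Phi> \<subseteq> {\<phi>. wf_fo Sig ar \<phi>}" unfolding \<Phi>_def by blast
  have cov: "stone_space Sig ar \<subseteq> \<Union>(K Sig ar ` \<Phi>)"
  proof
    fix U assume U: "U \<in> stone_space Sig ar"
    let ?O = "{x \<in> topspace (stone_top Sig ar). f x \<in> ball (f U) (\<epsilon>/2)}"
    have "openin (stone_top Sig ar) ?O"
      by (rule openin_continuous_map_preimage[OF f]) simp
    moreover have "U \<in> ?O" using U e by (simp add: topspace_stone)
    ultimately obtain \<phi> where \<phi>: "wf_fo Sig ar \<phi>" "U \<in> K Sig ar \<phi>" "K Sig ar \<phi> \<subseteq> ?O"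
      using open_basis by blast
    have "\<phi> \<in> \<Phi>" unfolding \<Phi>_def
    proof (intro CollectI conjI ballI)
      show "wf_fo Sig ar \<phi>" by (rule \<phi>(1))
      fix V W assume "V \<in> K Sig ar \<phi>" "W \<in> K Sig ar \<phi>"
      then have "dist (f U) (f V) < \<epsilon>/2" "dist (f U) (f W) < \<epsilon>/2" using \<phi>(3) by auto
      then show "\<bar>f V - f W\<bar> < \<epsilon>" unfolding dist_real_def by arith
    qed
    then show "U \<in> \<Union>(K Sig ar ` \<Phi>)" using \<phi>(2) by blast
  qed
  obtain \<Phi>' where P: "finite \<Phi>'" "\<Phi>' \<subseteq> \<Phi>" "stone_space Sig ar \<subseteq> \<Union>(K Sig ar ` \<Phi>')"
    using stone_cover[OF \<Phi>wf cov] by blast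
  obtain xs where xs: "set xs = \<Phi>'" using finite_list[OF P(1)] by blast
  define m where "m = length xs"
  define \<psi> where "\<psi> i = xs ! i" for i
  define E where "E i = (\<Union>j<i. K Sig ar (\<psi> j))" for i
  define D where "D i = K Sig ar (\<psi> i) - E i" for i
  define c where "c i = f (SOME U. U \<in> D i)" for i
  have \<psi>\<Phi>: "\<psi> i \<in> \<Phi>" if "i < m" for i
    using that xs P(2) unfolding \<psi>_def m_def by (metis nth_mem subsetD)
  have \<psi>wf: "wf_fo Sig ar (\<psi> i)" if "i < m" for i using \<psi>\<Phi>[OF that] \<Phi>wf by blast
  have EK: "i \<le> m \<longrightarrow> E i \<in> Kcl Sig ar" for i
  proof (induction i)
    case 0 then show ?case using Kcl_empty unfolding E_def by simp
  next
    case (Suc i)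
    have Es: "E (Suc i) = E i \<union> K Sig ar (\<psi> i)" unfolding E_def by (simp add: lessThan_Suc Un_commute)
    show ?case
    proof
      assume "Suc i \<le> m"
      then have "E i \<in> Kcl Sig ar" "K Sig ar (\<psi> i) \<in> Kcl Sig ar" using Suc.IH KclI[OF \<psi>wf[of i]] by auto
      then show "E (Suc i) \<in> Kcl Sig ar" using Kcl_un Es by simp
    qed
  qed
  have DK: "D i \<in> Kcl Sig ar" if "i < m" for i
    unfolding D_def using EK[of i] that by (intro Kcl_diff KclI \<psi>wf) auto
  have main: "\<bar>f U - (\<Sum>i<m. c i * indicator (D i) U)\<bar> \<le> \<epsilon>" if U: "U \<in> stone_space Sig ar" for U
  proof -
    obtain \<phi> where "\<phi> \<in> \<Phi>'" "U \<in> K Sig ar \<phi>" using P(3) U by blast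
    then obtain i where "i < m" "U \<in> K Sig ar (\<psi> i)" using xs unfolding \<psi>_def m_def by (metis in_set_conv_nth)
    then have ex: "\<exists>i. i < m \<and> U \<in> K Sig ar (\<psi> i)" by blast
    define k where "k = (LEAST i. i < m \<and> U \<in> K Sig ar (\<psi> i))"
    have k: "k < m" "U \<in> K Sig ar (\<psi> k)" using LeastI_ex[OF ex] unfolding k_def by blast+
    have kmin: "U \<notin> K Sig ar (\<psi> i)" if "i < k" for i
      using not_less_Least[of i "\<lambda>i. i < m \<and> U \<in> K Sig ar (\<psi> i)"] that k(1) unfolding k_def by auto
    have Dk: "U \<in> D k" unfolding D_def E_def using k kmin by blast
    have Di: "U \<notin> D i" if "i \<noteq> k" for i
    proof (cases "i < k")
      case True then show ?thesis using kmin unfolding D_def by blast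
    next
      case False then have "k < i" using that by simp
      then have "U \<in> E i" unfolding E_def using k(2) by blast
      then show ?thesis unfolding D_def by blast
    qed
    have "(\<Sum>i<m. c i * indicator (D i) U) = (\<Sum>i<m. if i = k then c k else 0)"
      by (rule sum.cong) (auto simp: indicator_def Dk Di)
    also have "\<dots> = c k" using k(1) by simp
    finally have s: "(\<Sum>i<m. c i * indicator (D i) U) = c k" .
    have "(SOME U. U \<in> D k) \<in> D k" using Dk by (rule someI)
    then have "(SOME U. U \<in> D k) \<in> K Sig ar (\<psi> k)" unfolding D_def by blast
    then have "\<bar>f U - c k\<bar> < \<epsilon>" using \<psi>\<Phi>[OF k(1)] k(2) unfolding \<Phi>_def c_def by blast
    then show ?thesis using s by simp
  qed
  have "(\<forall>i<m. D i \<in> Kcl Sig ar) \<and>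
           (\<forall>U\<in>stone_space Sig ar. \<bar>f U - (\<Sum>i<m. c i * indicator (D i) U)\<bar> \<le> \<epsilon>)"
    using DK main by blast
  then show ?thesis by blast
qed

lemma int_close:
  fixes f g :: "'b \<Rightarrow> real"
  assumes P: "prob_space M" and fm: "f \<in> borel_measurable M" and gm: "g \<in> borel_measurable M"
    and fg: "\<And>x. x \<in> space M \<Longrightarrow> \<bar>f x - g x\<bar> \<le> \<epsilon>" and gb: "\<And>x. x \<in> space M \<Longrightarrow> \<bar>g x\<bar> \<le> B"
  shows "\<bar>integral\<^sup>L M f - integral\<^sup>L M g\<bar> \<le> \<epsilon>"
proof -
  interpret prob_space M by (rule P)
  have ig: "integrable M g"
    by (rule integrable_const_bound[of _ B]) (use gb gm in auto)
  have fb: "\<bar>f x\<bar> \<le> B + \<epsilon>" if "x \<in> space M" for x using fg[OF that] gb[OF that] by linarith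
  have iF: "integrable M f"
    by (rule integrable_const_bound[of _ "B + \<epsilon>"]) (use fb fm in auto)
  have idf: "integrable M (\<lambda>x. \<bar>f x - g x\<bar>)" by (intro integrable_abs Bochner_Integration.integrable_diff iF ig)
  have "\<bar>integral\<^sup>L M f - integral\<^sup>L M g\<bar> = \<bar>integral\<^sup>L M (\<lambda>x. f x - g x)\<bar>"
    using iF ig by simp
  also have "\<dots> \<le> integral\<^sup>L M (\<lambda>x. \<bar>f x - g x\<bar>)"
    using integral_norm_bound[of M "\<lambda>x. f x - g x"] by simp
  also have "\<dots> \<le> integral\<^sup>L M (\<lambda>x. \<epsilon>)"
    by (rule integral_mono) (use idf fg in auto)
  also have "\<dots> = \<epsilon>" using prob_space by simp
  finally show ?thesis .
qed


lemma fo_to_weak: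
  fixes Sig :: "'r set" and A :: "nat \<Rightarrow> ('a, 'r) struct"
  assumes meas: "\<And>n. is_stone_measure_of Sig ar (A n) (\<mu> n)" and fo: "FO_convergent Sig ar A"
    and f: "continuous_map (stone_top Sig ar) euclideanreal f"
  shows "convergent (\<lambda>n. integral\<^sup>L (\<mu> n) f)"
proof -
  have rb: "regular_borel_prob (stone_top Sig ar) (\<mu> n)" for n
    using meas[of n] unfolding is_stone_measure_of_def by (rule conjunct1)
  have ps: "prob_space (\<mu> n)" for n by (rule rbp_prob[OF rb])
  have sp: "space (\<mu> n) = stone_space Sig ar" for n using rbp_space[OF rb] topspace_stone by simp
  have fm: "f \<in> borel_measurable (\<mu> n)" for n by (rule rbp_meas[OF rb f])
  have convD: "convergent (\<lambda>n. measure (\<mu> n) D)" if DK: "D \<in> Kcl Sig ar" for D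
  proof -
    obtain \<phi> where \<phi>: "wf_fo Sig ar \<phi>" "D = K Sig ar \<phi>" using DK unfolding Kcl_def by blast
    have "measure (\<mu> n) D = stone_pairing \<phi> (A n)" for n
      using meas[of n] \<phi> unfolding is_stone_measure_of_def by blast
    then show ?thesis using fo \<phi>(1) unfolding FO_convergent_def by simp
  qed
  show ?thesis unfolding Cauchy_convergent_iff[symmetric]
  proof (rule CauchyI)
    fix e :: real assume e: "0 < e"
    obtain k :: nat and c D where D: "\<forall>i<k. D i \<in> Kcl Sig ar"
      and app: "\<forall>U\<in>stone_space Sig ar. \<bar>f U - (\<Sum>i<k. c i * indicator (D i) U)\<bar> \<le> e/4"
      using approx[OF f, of "e/4"] e by auto
    define g where "g U = (\<Sum>i<k. c i * indicator (D i) U)" for U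
    have Ds: "D i \<in> sets (\<mu> n)" if "i < k" for i n using Kcl_sets[OF rb] D that by blast
    have gm: "g \<in> borel_measurable (\<mu> n)" for n
      unfolding g_def
      by (intro borel_measurable_sum borel_measurable_times borel_measurable_const borel_measurable_indicator Ds) simp
    have gb: "\<bar>g U\<bar> \<le> (\<Sum>i<k. \<bar>c i\<bar>)" for U
    proof -
      have "\<bar>g U\<bar> \<le> (\<Sum>i<k. \<bar>c i * indicator (D i) U\<bar>)" unfolding g_def by (rule sum_abs)
      also have "\<dots> \<le> (\<Sum>i<k. \<bar>c i\<bar>)"
        by (rule sum_mono) (auto simp: indicator_def abs_mult)
      finally show ?thesis .
    qed
    have Ig: "integral\<^sup>L (\<mu> n) g = (\<Sum>i<k. c i * measure (\<mu> n) (D i))" for n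
    proof -
      interpret prob_space "\<mu> n" by (rule ps)
      have "integral\<^sup>L (\<mu> n) g = (\<Sum>i<k. integral\<^sup>L (\<mu> n) (\<lambda>U. c i * indicator (D i) U))"
        unfolding g_def
        by (rule Bochner_Integration.integral_sum[where f="\<lambda>i U. c i * indicator (D i) U"]) (auto intro!: integrable_mult_right integrable_real_indicator simp: Ds less_top[symmetric])
      also have "\<dots> = (\<Sum>i<k. c i * measure (\<mu> n) (D i))"
      proof (rule sum.cong)
        fix i assume "i \<in> {..<k}"
        then have "D i \<inter> space (\<mu> n) = D i" using Ds[of i n] sets.sets_into_space by blast
        then show "integral\<^sup>L (\<mu> n) (\<lambda>U. c i * indicator (D i) U) = c i * measure (\<mu> n) (D i)" by simp
      qed simp
      finally show ?thesis .
    qed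
    have cg: "convergent (\<lambda>n. \<Sum>i<k. c i * measure (\<mu> n) (D i))"
      by (intro convergent_sum convergent_mult convergent_const convD) (use D in auto)
    obtain N where N: "\<forall>m\<ge>N. \<forall>n\<ge>N. norm ((\<Sum>i<k. c i * measure (\<mu> m) (D i)) - (\<Sum>i<k. c i * measure (\<mu> n) (D i))) < e/4"
      using CauchyD[OF cg[unfolded Cauchy_convergent_iff[symmetric]], of "e/4"] e by auto
    have cl: "\<bar>integral\<^sup>L (\<mu> n) f - integral\<^sup>L (\<mu> n) g\<bar> \<le> e/4" for n
    proof (rule int_close[OF ps fm gm])
      fix x assume "x \<in> space (\<mu> n)"
      then show "\<bar>f x - g x\<bar> \<le> e/4" using app sp unfolding g_def by auto
      show "\<bar>g x\<bar> \<le> (\<Sum>i<k. \<bar>c i\<bar>)" by (rule gb)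
    qed
    show "\<exists>M. \<forall>m\<ge>M. \<forall>n\<ge>M. norm (integral\<^sup>L (\<mu> m) f - integral\<^sup>L (\<mu> n) f) < e"
    proof (intro exI allI impI)
      fix m n assume "N \<le> m" "N \<le> n"
      then have "\<bar>integral\<^sup>L (\<mu> m) g - integral\<^sup>L (\<mu> n) g\<bar> < e/4" using N Ig by simp
      moreover note cl[of m] cl[of n]
      ultimately show "norm (integral\<^sup>L (\<mu> m) f - integral\<^sup>L (\<mu> n) f) < e" using e unfolding real_norm_def by arith
    qed
  qed
qed

theorem theorem2p16:
  fixes Sig :: "'r set" and ar :: "'r \<Rightarrow> nat"
    and A :: "nat \<Rightarrow> ('a, 'r) struct"
    and \<mu> :: "nat \<Rightarrow> 'r fo set measure"
  assumes "countable Sig"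
    and "\<And>n. is_finite_struct Sig ar (A n)"
    and "\<And>n. is_stone_measure_of Sig ar (A n) (\<mu> n)"
  shows "(FO_convergent Sig ar A \<longleftrightarrow> weak_star_convergent (stone_top Sig ar) \<mu>) \<and>
         (\<forall>\<nu>. regular_borel_prob (stone_top Sig ar) \<nu> \<longrightarrow>
           weak_star_converges_to (stone_top Sig ar) \<mu> \<nu> \<longrightarrow>
           (\<forall>\<phi>. wf_fo Sig ar \<phi> \<longrightarrow>
              (\<lambda>n. stone_pairing \<phi> (A n)) \<longlonglongrightarrow> integral\<^sup>L \<nu> (indicator (K Sig ar \<phi>))))"
proof (intro conjI iffI allI impI)
  assume "FO_convergent Sig ar A"
  then show "weak_star_convergent (stone_top Sig ar) \<mu>"
    unfolding weak_star_convergent_def using fo_to_weak[of Sig ar A \<mu>] assms(3) by blast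
next
  assume w: "weak_star_convergent (stone_top Sig ar) \<mu>"
  show "FO_convergent Sig ar A" unfolding FO_convergent_def
  proof (intro allI impI)
    fix \<phi> assume wf: "wf_fo Sig ar \<phi>"
    have "convergent (\<lambda>n. integral\<^sup>L (\<mu> n) (indicator (K Sig ar \<phi>) :: 'r fo set \<Rightarrow> real))"
      using w cont_ind[OF wf] unfolding weak_star_convergent_def by blast
    then show "convergent (\<lambda>n. stone_pairing \<phi> (A n))" using int_K[OF assms(3) wf] by simp
  qed
next
  fix \<nu> \<phi>
  assume w: "weak_star_converges_to (stone_top Sig ar) \<mu> \<nu>" and wf: "wf_fo Sig ar \<phi>"
  have "(\<lambda>n. integral\<^sup>L (\<mu> n) (indicator (K Sig ar \<phi>) :: 'r fo set \<Rightarrow> real)) \<longlonglongrightarrow> integral\<^sup>L \<nu> (indicator (K Sig ar \<phi>))"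
    using w cont_ind[OF wf] unfolding weak_star_converges_to_def by blast
  then show "(\<lambda>n. stone_pairing \<phi> (A n)) \<longlonglongrightarrow> integral\<^sup>L \<nu> (indicator (K Sig ar \<phi>))"
    using int_K[OF assms(3) wf] by simp
qed

end
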